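(* Let $\mathcal T,\mathcal S$ be sets, $N\ge1$ an integer, $0<\delta<1\le M$, and $\tau:\mathcal T\to(0,M]$, $\sigma:\mathcal S\to(0,M]$ functions. (1) Suppose that for all integers $k\ge N$ and $\ell\ge1$, $$\#\tau^{-1}([\delta^{k+\ell},\delta^k))\le\#\sigma^{-1}([\delta^{k+\ell+1},\delta^{k-1}))\quad\text{and}\quad \#\sigma^{-1}([\delta^{k+\ell},\delta^k))\le\#\tau^{-1}([\delta^{k+\ell+1},\delta^{k-1})).$$ Then there is $\delta'>0$ such that one of the following holds: (i) there is a bijection $\eta:\mathcal T\to\mathcal S$ with $\delta'\le \tau(t)/\sigma(\eta(t))\le 1/\delta'$ for all $t\in\mathcal T$; (ii) for some set $\mathcal I$ (disjoint from $\mathcal T$), extending $\tau$ to $\mathcal T\cup\mathcal I$ by $\tau(t)=1$ for $t\in\mathcal I$, there is a bijection $\eta:\mathcal T\cup\mathcal I\to\mathcal S$ with $\delta'\le \tau(t)/\sigma(\eta(t))\le 1/\delta'$ for all $t\in\mathcal T\cup\mathcal I$; (iii) for some set $\mathcal I$ (disjoint from $\mathcal S$), extending $\sigma$ to $\mathcal S\cup\mathcal I$ by $\sigma(s)=1$ for $s\in\mathcal I$, there is a bijection $\eta:\mathcal T\to\mathcal S\cup\mathcal I$ with $\delta'\le \tau(t)/\sigma(\eta(t))\le 1/\delta'$ for all $t\in\mathcal T$. (2) If the two displayed inequalities hold for all integers $k\in\mathbb Z$ (and all $\ell\ge1$), then alternative (i) holds for some $\delta'>0$.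
   Context: $\#$ denotes cardinality (possibly infinite). *)

theory Defs
  imports Complex_Main "HOL-Library.Equipollence"
begin

text \<open>Preimage of the half-open interval [a,b) under f, restricted to the domain A.
  Cardinality comparison #X \<le> #Y (possibly infinite) is rendered by lepoll X Y.\<close>

definition lvl :: "('x \<Rightarrow> real) \<Rightarrow> 'x set \<Rightarrow> real \<Rightarrow> real \<Rightarrow> 'x set" where
  "lvl f A a b = {x \<in> A. a \<le> f x \<and> f x < b}"

end

theory Submission
  imports Defs
begin

unbundle cardinal_syntax

lemma lepoll_finite: "A \<lesssim> B \<Longrightarrow> finite B \<Longrightarrow> finite A"
  unfolding lepoll_def using inj_on_finite by blast

lemma lepoll_total: "A \<lesssim> B \<or> B \<lesssim> A"
  using ordLeq_total[OF card_of_Well_order card_of_Well_order, of A B]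
  by (simp add: lepoll_def card_of_ordLeq[symmetric])

lemma lepoll_from_ordLeq: "|A| \<le>o |B| \<Longrightarrow> A \<lesssim> B"
  by (simp add: lepoll_def card_of_ordLeq[symmetric])

lemma ordLeq_from_lepoll: "A \<lesssim> B \<Longrightarrow> |A| \<le>o |B|"
  by (simp add: lepoll_def card_of_ordLeq[symmetric])

lemma Un_absorb_infinite:
  assumes "infinite Y" "X \<lesssim> Y" shows "X \<union> Y \<lesssim> Y"
proof -
  have "|X <+> Y| =o |Y|" using card_of_Plus_infinite2[OF assms(1) ordLeq_from_lepoll[OF assms(2)]] .
  then have "|X \<union> Y| \<le>o |Y|" using card_of_Un_Plus_ordLeq ordLeq_ordIso_trans by blast
  then show ?thesis by (rule lepoll_from_ordLeq)
qed

lemma infinite_lepoll_Un: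
  assumes "infinite A" "A \<lesssim> X \<union> Y" shows "A \<lesssim> X \<or> A \<lesssim> Y"
proof (cases "X \<lesssim> Y")
  case True
  show ?thesis
  proof (cases "finite Y")
    case True
    then have "finite X" using \<open>X \<lesssim> Y\<close>
      using lepoll_finite finite_UnI by blast
    then have "finite A" using assms(2) True
      using lepoll_finite finite_UnI by blast
    then show ?thesis using assms by simp
  next
    case False
    then show ?thesis using Un_absorb_infinite[OF False True] assms lepoll_trans by blast
  qed
next
  case False
  then have "Y \<lesssim> X" using lepoll_total by blast
  show ?thesis
  proof (cases "finite X")
    case True
    then have "finite Y" using \<open>Y \<lesssim> X\<close>
      using lepoll_finite finite_UnI by blast
    then have "finite A" using assms(2) True
      using lepoll_finite finite_UnI by blast
    then show ?thesis using assms by simp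
  next
    case False
    then show ?thesis using Un_absorb_infinite[OF False \<open>Y \<lesssim> X\<close>] assms lepoll_trans
      by (metis sup_commute)
  qed
qed

lemma infinite_split:
  assumes "infinite Y" shows "\<exists>Y1 Y2. Y1 \<inter> Y2 = {} \<and> Y1 \<union> Y2 = Y \<and> Y \<approx> Y1 \<and> Y \<approx> Y2"
proof -
  have "|Y <+> Y| =o |Y|" using card_of_Plus_infinite1[OF assms] card_of_refl ordIso_iff_ordLeq by blast
  then obtain b where b: "bij_betw b (Y <+> Y) Y" using card_of_ordIso by blast
  define Y1 where "Y1 = b ` Inl ` Y"
  define Y2 where "Y2 = b ` Inr ` Y"
  have inj: "inj_on b (Y <+> Y)" using b bij_betw_def by blast
  have "Y1 \<inter> Y2 = {}" unfolding Y1_def Y2_def using inj by (auto simp: inj_on_def)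
  moreover have "Y1 \<union> Y2 = Y" using b unfolding Y1_def Y2_def bij_betw_def Plus_def by (simp add: image_Un)
  moreover have "Y \<approx> Y1"
  proof -
    have i1: "inj_on (b \<circ> Inl) Y" by (rule inj_onI) (use inj in \<open>auto dest: inj_onD\<close>)
    show ?thesis unfolding Y1_def eqpoll_def using bij_betw_imageI[OF i1 refl] by (auto simp: image_comp)
  qed
  moreover have "Y \<approx> Y2"
  proof -
    have i1: "inj_on (b \<circ> Inr) Y" by (rule inj_onI) (use inj in \<open>auto dest: inj_onD\<close>)
    show ?thesis unfolding Y2_def eqpoll_def using bij_betw_imageI[OF i1 refl] by (auto simp: image_comp)
  qed
  ultimately show ?thesis by blast
qed

lemma infinite_embed_keep:
  assumes "infinite A" "A \<lesssim> Y"
  shows "\<exists>g. inj_on g A \<and> g ` A \<subseteq> Y \<and> Y \<lesssim> Y - g ` A"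
proof -
  have "infinite Y" using assms
    using lepoll_finite finite_UnI by blast
  then obtain Y1 Y2 where Y: "Y1 \<inter> Y2 = {}" "Y1 \<union> Y2 = Y" "Y \<approx> Y1" "Y \<approx> Y2"
    using infinite_split by blast
  have "A \<lesssim> Y1" using assms(2) Y(3) lepoll_trans2 by blast
  then obtain g where g: "inj_on g A" "g ` A \<subseteq> Y1" unfolding lepoll_def by blast
  have "Y2 \<subseteq> Y - g ` A" using g Y by blast
  then have "Y \<lesssim> Y - g ` A" using Y(4) lepoll_trans1 subset_imp_lepoll by blast
  with g Y show ?thesis by blast
qed

lemma cancel_finite:
  assumes "finite A" "A \<inter> X = {}" "B \<inter> Y = {}" "A \<approx> B" "A \<union> X \<lesssim> B \<union> Y"
  shows "X \<lesssim> Y"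
proof (cases "finite Y")
  case False
  have fB: "finite B" using assms eqpoll_finite_iff by blast
  have "X \<lesssim> B \<union> Y" using assms(5) subset_imp_lepoll lepoll_trans by (metis Un_upper2)
  also have "B \<union> Y \<lesssim> Y" using Un_absorb_infinite[OF False finite_lepoll_infinite[OF False fB]] .
  finally show ?thesis .
next
  case True
  have fB: "finite B" using assms eqpoll_finite_iff by blast
  have fAX: "finite (A \<union> X)"
    using assms(5) True fB
    using lepoll_finite finite_UnI by blast
  then have fX: "finite X" by simp
  have "card (A \<union> X) \<le> card (B \<union> Y)" using assms(5) fAX True fB by (simp add: lepoll_iff_card_le)
  moreover have "card (A \<union> X) = card A + card X" using assms(1,2) fX by (simp add: card_Un_disjoint)
  moreover have "card (B \<union> Y) = card B + card Y" using assms(3) fB True by (simp add: card_Un_disjoint)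
  moreover have "card A = card B" using assms(4) assms(1) fB by (simp add: eqpoll_iff_card)
  ultimately have "card X \<le> card Y" by simp
  then show ?thesis using fX True by (simp add: lepoll_iff_card_le)
qed



lemma finite_fill:
  assumes "finite A" "A \<lesssim> C \<union> D" "finite C" "card C \<le> card A" "C \<inter> D = {}"
  shows "\<exists>Q\<subseteq>D. A \<approx> C \<union> Q"
proof -
  obtain Q where Q: "Q \<subseteq> D" "finite Q" "card Q = card A - card C"
  proof (cases "finite D")
    case True
    have "finite (C \<union> D)" using True assms(3) by simp
    then have "card A \<le> card (C \<union> D)" using assms(1,2) by (simp add: lepoll_iff_card_le)
    also have "\<dots> = card C + card D" using assms(3,5) True by (simp add: card_Un_disjoint)
    finally have "card A - card C \<le> card D" by simp
    then show ?thesis using obtain_subset_with_card_n that by metis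
  next
    case False
    then show ?thesis using infinite_arbitrarily_large that by metis
  qed
  have "C \<inter> Q = {}" using Q assms(5) by blast
  then have "card (C \<union> Q) = card A" using Q assms(3,4) by (simp add: card_Un_disjoint)
  then have "A \<approx> C \<union> Q" using assms(1,3) Q by (simp add: eqpoll_iff_card)
  with Q show ?thesis by blast
qed

definition Tw :: "'x set \<Rightarrow> ('x \<Rightarrow> int) \<Rightarrow> int \<Rightarrow> int \<Rightarrow> 'x set" where
  "Tw A p a b = {t\<in>A. a \<le> p t \<and> p t \<le> b}"


lemma Tw_disj: "b < c \<Longrightarrow> Tw A p a b \<inter> Tw A p c d = {}"
  by (auto simp: Tw_def)

lemma Tw_empty: "b < a \<Longrightarrow> Tw A p a b = {}"
  by (auto simp: Tw_def)

lemma Tw_mono: "a \<le> a' \<Longrightarrow> b' \<le> b \<Longrightarrow> Tw A p a' b' \<subseteq> Tw A p a b"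
  by (auto simp: Tw_def)

locale core =
  fixes T :: "'a set" and S :: "'b set" and p :: "'a \<Rightarrow> int" and q :: "'b \<Rightarrow> int" and j0 :: int
  assumes H: "\<And>k m. j0 \<le> k \<Longrightarrow> k \<le> m \<Longrightarrow> Tw T p k m \<lesssim> Tw S q (k-1) (m+1)"
begin

definition good :: "int \<Rightarrow> 'b set \<Rightarrow> 'b set \<Rightarrow> bool" where
  "good j R0 R1 \<longleftrightarrow> R0 \<subseteq> Tw S q (j-1) (j-1) \<and> R1 \<subseteq> Tw S q j j
     \<and> (\<forall>m\<ge>j. Tw T p j m \<lesssim> R0 \<union> R1 \<union> Tw S q (j+1) (m+1))
     \<and> (\<forall>m\<ge>j+1. Tw T p (j+1) m \<lesssim> R1 \<union> Tw S q (j+1) (m+1))"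

lemma good_init: "good j0 (Tw S q (j0-1) (j0-1)) (Tw S q j0 j0)"
proof -
  have "Tw T p j0 m \<lesssim> Tw S q (j0-1) (j0-1) \<union> Tw S q j0 j0 \<union> Tw S q (j0+1) (m+1)" if "m \<ge> j0" for m
  proof -
    have "Tw S q (j0-1) (m+1) = Tw S q (j0-1) (j0-1) \<union> Tw S q j0 j0 \<union> Tw S q (j0+1) (m+1)"
      using that by (auto simp: Tw_def)
    then show ?thesis using H[of j0 m] that by simp
  qed
  moreover have "Tw T p (j0+1) m \<lesssim> Tw S q j0 j0 \<union> Tw S q (j0+1) (m+1)" if "m \<ge> j0+1" for m
  proof -
    have "Tw S q j0 (m+1) = Tw S q j0 j0 \<union> Tw S q (j0+1) (m+1)"
      using that by (auto simp: Tw_def)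
    then show ?thesis using H[of "j0+1" m] that by simp
  qed
  ultimately show ?thesis unfolding good_def by (auto simp: Tw_def)
qed

lemma good_intro:
  assumes "R0' \<subseteq> Tw S q j j" "R1' \<subseteq> Tw S q (j+1) (j+1)"
    "\<And>m. m \<ge> j+1 \<Longrightarrow> Tw T p (j+1) m \<lesssim> R0' \<union> R1' \<union> Tw S q (j+2) (m+1)"
    "\<And>m. m \<ge> j+2 \<Longrightarrow> Tw T p (j+2) m \<lesssim> R1' \<union> Tw S q (j+2) (m+1)"
  shows "good (j+1) R0' R1'"
  using assms unfolding good_def by (simp add: add.assoc)

lemma step:
  assumes j: "j \<ge> j0" and g: "good j R0 R1"
  shows "\<exists>g. inj_on g (Tw T p j j) \<and> g ` Tw T p j j \<subseteq> R0 \<union> R1 \<union> Tw S q (j+1) (j+1)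
           \<and> good (j+1) (R1 - g ` Tw T p j j) (Tw S q (j+1) (j+1) - g ` Tw T p j j)"
proof -
  define A where "A = Tw T p j j"
  define L1 where "L1 = Tw S q (j+1) (j+1)"
  define W where "W = (\<lambda>m. Tw S q (j+2) (m+1))"
  define X where "X = (\<lambda>m. Tw T p (j+1) m)"
  have R0: "R0 \<subseteq> Tw S q (j-1) (j-1)" and R1: "R1 \<subseteq> Tw S q j j" using g unfolding good_def by auto
  have GA: "A \<union> X m \<lesssim> R0 \<union> R1 \<union> L1 \<union> W m" if "m \<ge> j" for m
  proof -
    have e1: "Tw T p j m = A \<union> X m" unfolding A_def X_def using that by (auto simp: Tw_def)
    have e2: "Tw S q (j+1) (m+1) = L1 \<union> W m" unfolding L1_def W_def using that by (auto simp: Tw_def)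
    have "Tw T p j m \<lesssim> R0 \<union> R1 \<union> Tw S q (j+1) (m+1)" using g that unfolding good_def by blast
    then show ?thesis by (simp add: e1 e2 Un_assoc)
  qed
  have GB: "X m \<lesssim> R1 \<union> L1 \<union> W m" if "m \<ge> j+1" for m
  proof -
    have e2: "Tw S q (j+1) (m+1) = L1 \<union> W m" unfolding L1_def W_def using that by (auto simp: Tw_def)
    have "Tw T p (j+1) m \<lesssim> R1 \<union> Tw S q (j+1) (m+1)" using g that unfolding good_def by blast
    then show ?thesis by (simp add: e2 X_def Un_assoc)
  qed
  have HH: "Tw T p (j+2) m \<lesssim> L1 \<union> W m" if "m \<ge> j+2" for m
  proof -
    have "Tw S q (j+2-1) (m+1) = L1 \<union> W m" unfolding L1_def W_def using that by (auto simp: Tw_def)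
    then show ?thesis using H[of "j+2" m] that j by simp
  qed
  have dR0R1: "R0 \<inter> R1 = {}" using R0 R1 by (fastforce simp: Tw_def subset_iff)
  have dR1L1: "R1 \<inter> L1 = {}" using R1 by (fastforce simp: Tw_def L1_def subset_iff)
  have dR0L1: "R0 \<inter> L1 = {}" using R0 by (fastforce simp: Tw_def L1_def subset_iff)
  have dW: "(R0 \<union> R1 \<union> L1) \<inter> W m = {}" for m using R0 R1 by (fastforce simp: Tw_def L1_def W_def subset_iff)
  have dAX: "A \<inter> X m = {}" for m by (auto simp: Tw_def A_def X_def)
  have XW0: "X j = {}" "W j = {}" by (auto simp: Tw_def X_def W_def)
  have A0: "A \<lesssim> R0 \<union> R1 \<union> L1" using GA[of j] XW0 by simp
  have L1T: "L1 \<subseteq> Tw S q (j+1) (j+1)" by (simp add: L1_def)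
  show ?thesis unfolding A_def[symmetric] L1_def[symmetric]
  proof (cases "A \<lesssim> R0")
    case True
    then obtain g where g: "inj_on g A" "g ` A \<subseteq> R0" unfolding lepoll_def by blast
    have e1: "R1 - g ` A = R1" using g dR0R1 by blast
    have e2: "L1 - g ` A = L1" using g dR0L1 by blast
    have "good (j+1) R1 L1"
      by (rule good_intro) (use R1 GB HH in \<open>auto simp: L1_def W_def X_def\<close>)
    then show "\<exists>g. inj_on g A \<and> g ` A \<subseteq> R0 \<union> R1 \<union> L1 \<and> good (j + 1) (R1 - g ` A) (L1 - g ` A)"
      using g e1 e2 by (intro exI[of _ g]) auto
  next
    case notR0: False
    show "\<exists>g. inj_on g A \<and> g ` A \<subseteq> R0 \<union> R1 \<union> L1 \<and> good (j + 1) (R1 - g ` A) (L1 - g ` A)"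
    proof (cases "finite A")
      case False
      have "A \<lesssim> R0 \<or> A \<lesssim> R1 \<union> L1" using infinite_lepoll_Un[OF False, of R0 "R1 \<union> L1"] A0
        by (simp add: Un_assoc)
      then have "A \<lesssim> R1 \<or> A \<lesssim> L1" using notR0 infinite_lepoll_Un[OF False] by blast
      then show ?thesis
      proof
        assume "A \<lesssim> R1"
        then obtain g where g: "inj_on g A" "g ` A \<subseteq> R1" "R1 \<lesssim> R1 - g ` A"
          using infinite_embed_keep[OF False] by blast
        have e2: "L1 - g ` A = L1" using g dR1L1 by blast
        have "good (j+1) (R1 - g ` A) L1"
        proof (rule good_intro)
          fix m assume m: "j+1 \<le> m"
          have "X m \<lesssim> R1 \<union> (L1 \<union> W m)" using GB[OF m] by (simp add: Un_assoc)
          also have "\<dots> \<lesssim> (R1 - g ` A) \<union> (L1 \<union> W m)"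
            using Un_lepoll_mono[OF g(3) lepoll_refl, of "L1 \<union> W m"] dR1L1 dW
            by (auto simp: disjnt_def)
          finally show "Tw T p (j+1) m \<lesssim> (R1 - g ` A) \<union> L1 \<union> Tw S q (j+2) (m+1)"
            by (simp add: X_def W_def Un_assoc)
        qed (use R1 HH in \<open>auto simp: L1_def W_def\<close>)
        then show ?thesis using g e2 by (intro exI[of _ g]) auto
      next
        assume "A \<lesssim> L1"
        then obtain g where g: "inj_on g A" "g ` A \<subseteq> L1" "L1 \<lesssim> L1 - g ` A"
          using infinite_embed_keep[OF False] by blast
        have e1: "R1 - g ` A = R1" using g dR1L1 by blast
        have dLW: "L1 \<inter> W m = {}" for m using dW by blast
        have "good (j+1) R1 (L1 - g ` A)"
        proof (rule good_intro)
          fix m assume m: "j+1 \<le> m"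
          have "X m \<lesssim> L1 \<union> (R1 \<union> W m)" using GB[OF m] by (simp add: Un_ac)
          also have "\<dots> \<lesssim> (L1 - g ` A) \<union> (R1 \<union> W m)"
            using Un_lepoll_mono[OF g(3) lepoll_refl, of "R1 \<union> W m"] dR1L1 dW
            by (auto simp: disjnt_def)
          finally show "Tw T p (j+1) m \<lesssim> R1 \<union> (L1 - g ` A) \<union> Tw S q (j+2) (m+1)"
            by (simp add: X_def W_def Un_ac)
        next
          fix m assume m: "j+2 \<le> m"
          have "Tw T p (j+2) m \<lesssim> L1 \<union> W m" using HH[OF m] .
          also have "\<dots> \<lesssim> (L1 - g ` A) \<union> W m"
            using Un_lepoll_mono[OF g(3) lepoll_refl, of "W m"] dLW
            by (auto simp: disjnt_def)
          finally show "Tw T p (j+2) m \<lesssim> (L1 - g ` A) \<union> Tw S q (j+2) (m+1)"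
            by (simp add: W_def)
        qed (use R1 in \<open>auto simp: L1_def\<close>)
        then show ?thesis using g e1 by (intro exI[of _ g]) auto
      qed
    next
      case fA: True
      have fR0: "finite R0" using notR0 finite_lepoll_infinite fA by blast
      have R0A: "R0 \<lesssim> A" using notR0 lepoll_total by blast
      have cR0: "card R0 \<le> card A" using R0A fR0 fA by (simp add: lepoll_iff_card_le)
      show ?thesis
      proof (cases "A \<lesssim> R0 \<union> R1")
        case True
        obtain Q where Q: "Q \<subseteq> R1" "A \<approx> R0 \<union> Q"
          using finite_fill[OF fA True fR0 cR0 dR0R1] by blast
        then obtain g where g: "bij_betw g A (R0 \<union> Q)" unfolding eqpoll_def by blast
        have gi: "g ` A = R0 \<union> Q" "inj_on g A" using g by (auto simp: bij_betw_def)
        have e1: "R1 - g ` A = R1 - Q" using gi dR0R1 by blast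
        have e2: "L1 - g ` A = L1" using gi Q dR0L1 dR1L1 by blast
        have "good (j+1) (R1 - Q) L1"
        proof (rule good_intro)
          fix m assume m: "j+1 \<le> m"
          have "A \<union> X m \<lesssim> (R0 \<union> Q) \<union> ((R1 - Q) \<union> L1 \<union> W m)"
          proof -
            have "R0 \<union> R1 \<union> L1 \<union> W m = (R0 \<union> Q) \<union> ((R1 - Q) \<union> L1 \<union> W m)" using Q by blast
            then show ?thesis using GA[of m] m by simp
          qed
          moreover have "(R0 \<union> Q) \<inter> ((R1 - Q) \<union> L1 \<union> W m) = {}"
            using Q dR0R1 dR0L1 dR1L1 dW by blast
          ultimately have "X m \<lesssim> (R1 - Q) \<union> L1 \<union> W m"
            using cancel_finite[OF fA dAX _ Q(2)] by blast
          then show "Tw T p (j+1) m \<lesssim> (R1 - Q) \<union> L1 \<union> Tw S q (j+2) (m+1)"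
            by (simp add: X_def W_def)
        qed (use R1 HH in \<open>auto simp: L1_def W_def\<close>)
        then show ?thesis using gi e1 e2 Q(1) by (intro exI[of _ g]) auto
      next
        case False
        have fR01: "finite (R0 \<union> R1)" using False finite_lepoll_infinite fA by blast
        have R01A: "R0 \<union> R1 \<lesssim> A" using False lepoll_total by blast
        have c: "card (R0 \<union> R1) \<le> card A" using R01A fR01 fA by (simp add: lepoll_iff_card_le)
        have d: "(R0 \<union> R1) \<inter> L1 = {}" using dR0L1 dR1L1 by blast
        obtain P where P: "P \<subseteq> L1" "A \<approx> R0 \<union> R1 \<union> P"
          using finite_fill[OF fA A0 fR01 c d] by blast
        then obtain g where g: "bij_betw g A (R0 \<union> R1 \<union> P)" unfolding eqpoll_def by blast
        have gi: "g ` A = R0 \<union> R1 \<union> P" "inj_on g A" using g by (auto simp: bij_betw_def)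
        have e1: "R1 - g ` A = {}" using gi by blast
        have e2: "L1 - g ` A = L1 - P" using gi d by blast
        have X1: "X m \<lesssim> (L1 - P) \<union> W m" if m: "j+1 \<le> m" for m
        proof -
          have "A \<union> X m \<lesssim> (R0 \<union> R1 \<union> P) \<union> ((L1 - P) \<union> W m)"
          proof -
            have "R0 \<union> R1 \<union> L1 \<union> W m = (R0 \<union> R1 \<union> P) \<union> ((L1 - P) \<union> W m)" using P by blast
            then show ?thesis using GA[of m] m by simp
          qed
          moreover have "(R0 \<union> R1 \<union> P) \<inter> ((L1 - P) \<union> W m) = {}"
            using P d dW by blast
          ultimately show "X m \<lesssim> (L1 - P) \<union> W m"
            using cancel_finite[OF fA dAX _ P(2)] by blast
        qed
        have "good (j+1) {} (L1 - P)"
        proof (rule good_intro)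
          fix m assume m: "j+1 \<le> m"
          show "Tw T p (j+1) m \<lesssim> {} \<union> (L1 - P) \<union> Tw S q (j+2) (m+1)"
            using X1[OF m] by (simp add: X_def W_def)
        next
          fix m assume m: "j+2 \<le> m"
          have "Tw T p (j+2) m \<subseteq> X m" by (auto simp: X_def Tw_def)
          then show "Tw T p (j+2) m \<lesssim> (L1 - P) \<union> Tw S q (j+2) (m+1)"
            using X1[of m] m subset_imp_lepoll lepoll_trans by (fastforce simp: W_def)
        qed (auto simp: L1_def)
        then have "good (j+1) (R1 - g ` A) (L1 - g ` A)" by (simp only: e1 e2)
        moreover have "g ` A \<subseteq> R0 \<union> R1 \<union> L1" using gi P(1) by blast
        ultimately show ?thesis using gi by blast
      qed
    qed
  qed
qed


definition G where "G j R0 R1 = (SOME g. inj_on g (Tw T p j j) \<and> g ` Tw T p j j \<subseteq> R0 \<union> R1 \<union> Tw S q (j+1) (j+1)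
           \<and> good (j+1) (R1 - g ` Tw T p j j) (Tw S q (j+1) (j+1) - g ` Tw T p j j))"

lemma G: assumes "j \<ge> j0" "good j R0 R1"
  shows "inj_on (G j R0 R1) (Tw T p j j) \<and> G j R0 R1 ` Tw T p j j \<subseteq> R0 \<union> R1 \<union> Tw S q (j+1) (j+1)
           \<and> good (j+1) (R1 - G j R0 R1 ` Tw T p j j) (Tw S q (j+1) (j+1) - G j R0 R1 ` Tw T p j j)"
  unfolding G_def by (rule someI_ex[OF step[OF assms]])

primrec st :: "nat \<Rightarrow> 'b set \<times> 'b set" where
  "st 0 = (Tw S q (j0-1) (j0-1), Tw S q j0 j0)"
| "st (Suc n) = (snd (st n) - G (j0 + int n) (fst (st n)) (snd (st n)) ` Tw T p (j0+int n) (j0+int n),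
     Tw S q (j0+int n+1) (j0+int n+1) - G (j0 + int n) (fst (st n)) (snd (st n)) ` Tw T p (j0+int n) (j0+int n))"

definition gf where "gf n = G (j0+int n) (fst (st n)) (snd (st n))"
definition img where "img n = gf n ` Tw T p (j0+int n) (j0+int n)"

lemma st_Suc': "fst (st (Suc n)) = snd (st n) - img n"
  "snd (st (Suc n)) = Tw S q (j0+int n+1) (j0+int n+1) - img n"
  by (simp_all add: img_def gf_def)

lemma good_st: "good (j0 + int n) (fst (st n)) (snd (st n))"
proof (induction n)
  case 0
  then show ?case using good_init by simp
next
  case (Suc n)
  have "good (j0 + int n + 1) (snd (st n) - img n) (Tw S q (j0+int n+1) (j0+int n+1) - img n)"
    using G[OF _ Suc] unfolding img_def gf_def by simp
  moreover have e: "j0 + int (Suc n) = j0 + int n + 1" by simp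
  ultimately show ?case by (simp only: e st_Suc')
qed

lemma gf_props: "inj_on (gf n) (Tw T p (j0+int n) (j0+int n))"
  "img n \<subseteq> fst (st n) \<union> snd (st n) \<union> Tw S q (j0+int n+1) (j0+int n+1)"
  using G[OF _ good_st[of n]] unfolding img_def gf_def by auto

lemma img_levels: assumes "s \<in> img n" shows "s \<in> S \<and> j0+int n-1 \<le> q s \<and> q s \<le> j0+int n+1"
proof -
  have "fst (st n) \<subseteq> Tw S q (j0+int n-1) (j0+int n-1)" "snd (st n) \<subseteq> Tw S q (j0+int n) (j0+int n)"
    using good_st[of n] unfolding good_def by auto
  then show ?thesis using assms gf_props(2)[of n] by (fastforce simp: Tw_def)
qed

definition used where "used n = (\<Union>i<n. img i)"

lemma inv: "used n \<inter> (fst (st n) \<union> snd (st n)) = {} \<and> (\<forall>s\<in>used n. q s \<le> j0 + int n)"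
proof (induction n)
  case 0
  then show ?case by (simp add: used_def)
next
  case (Suc n)
  have u: "used (Suc n) = used n \<union> img n" by (simp add: used_def lessThan_Suc Un_commute)
  have l1: "\<forall>s\<in>used (Suc n). q s \<le> j0 + int (Suc n)"
    using Suc img_levels[of _ n] unfolding u by force
  have "used n \<inter> Tw S q (j0+int n+1) (j0+int n+1) = {}" using Suc by (force simp: Tw_def)
  then have "used (Suc n) \<inter> (fst (st (Suc n)) \<union> snd (st (Suc n))) = {}"
    using Suc unfolding u st_Suc' by blast
  with l1 show ?case by blast
qed

lemma img_disj: assumes "i < n" shows "img i \<inter> img n = {}"
proof -
  have "img i \<subseteq> used n" using assms by (auto simp: used_def)
  moreover have "used n \<inter> Tw S q (j0+int n+1) (j0+int n+1) = {}" using inv[of n] by (force simp: Tw_def)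
  ultimately show ?thesis using inv[of n] gf_props(2)[of n] by blast
qed

theorem core_inj: "\<exists>f. inj_on f {t\<in>T. j0 \<le> p t} \<and> (\<forall>t\<in>T. j0 \<le> p t \<longrightarrow> f t \<in> S \<and> \<bar>p t - q (f t)\<bar> \<le> 1)"
proof -
  define f where "f t = gf (nat (p t - j0)) t" for t
  have mem: "f t \<in> img (nat (p t - j0))" if "t \<in> T" "j0 \<le> p t" for t
  proof -
    have "j0 + int (nat (p t - j0)) = p t" using that by simp
    then have "t \<in> Tw T p (j0 + int (nat (p t - j0))) (j0 + int (nat (p t - j0)))" using that by (simp add: Tw_def)
    then show ?thesis unfolding f_def img_def by blast
  qed
  have P: "f t \<in> S \<and> \<bar>p t - q (f t)\<bar> \<le> 1" if "t \<in> T" "j0 \<le> p t" for t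
    using img_levels[OF mem[OF that]] that by auto
  have "inj_on f {t\<in>T. j0 \<le> p t}"
  proof (rule inj_onI)
    fix x y assume x: "x \<in> {t\<in>T. j0 \<le> p t}" and y: "y \<in> {t\<in>T. j0 \<le> p t}" and e: "f x = f y"
    show "x = y"
    proof (cases "nat (p x - j0) = nat (p y - j0)")
      case True
      define n where "n = nat (p x - j0)"
      have "x \<in> Tw T p (j0+int n) (j0+int n)" "y \<in> Tw T p (j0+int n) (j0+int n)"
        using x y True by (auto simp: Tw_def n_def)
      moreover have "gf n x = gf n y" using e True unfolding f_def n_def by simp
      ultimately show ?thesis using gf_props(1)[of n] by (auto dest: inj_onD)
    next
      case False
      then have "img (nat (p x - j0)) \<inter> img (nat (p y - j0)) = {}"
        using img_disj by (metis Int_commute linorder_neqE_nat)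
      moreover have "f x \<in> img (nat (p x - j0))" "f y \<in> img (nat (p y - j0))" using mem x y by auto
      ultimately show ?thesis using e by auto
    qed
  qed
  then show ?thesis using P by blast
qed

end



definition lev :: "real \<Rightarrow> real \<Rightarrow> int" where "lev \<delta> x = \<lceil>ln x / ln \<delta>\<rceil> - 1"

lemma lev_bounds:
  assumes "0 < \<delta>" "\<delta> < 1"
  shows "of_int (lev \<delta> x) < ln x / ln \<delta> \<and> ln x / ln \<delta> \<le> of_int (lev \<delta> x) + 1"
  using ceiling_correct[of "ln x / ln \<delta>"] unfolding lev_def by simp

lemma powi_exp: fixes \<delta> :: real assumes "0 < \<delta>" shows "\<delta> powi a = exp (of_int a * ln \<delta>)"
proof -
  have "\<delta> powi a = exp (ln \<delta>) powi a" by (subst exp_ln[OF assms]) simp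
  also have "\<dots> = exp (of_int a * ln \<delta>)" by (rule exp_power_int)
  finally show ?thesis .
qed

lemma lev_iv:
  assumes d: "0 < \<delta>" "\<delta> < 1" and x: "0 < x"
  shows "(\<delta> powi a \<le> x \<and> x < \<delta> powi b) \<longleftrightarrow> (b \<le> lev \<delta> x \<and> lev \<delta> x \<le> a - 1)"
proof -
  define L where "L = ln \<delta>"
  define y where "y = ln x / L"
  have L: "L < 0" using d by (simp add: L_def)
  have lx: "ln x = y * L" using L by (simp add: y_def)
  have "\<delta> powi a \<le> x \<longleftrightarrow> of_int a * L \<le> ln x"
    using powi_exp[OF d(1), of a] x by (metis L_def exp_le_cancel_iff exp_ln)
  also have "\<dots> \<longleftrightarrow> y \<le> of_int a" using L lx by (simp add: mult_le_cancel_right)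
  also have "\<dots> \<longleftrightarrow> lev \<delta> x \<le> a - 1" using ceiling_le_iff[of y a] unfolding lev_def y_def L_def by linarith
  finally have 1: "\<delta> powi a \<le> x \<longleftrightarrow> lev \<delta> x \<le> a - 1" .
  have "x < \<delta> powi b \<longleftrightarrow> ln x < of_int b * L"
    using powi_exp[OF d(1), of b] x by (metis L_def exp_less_cancel_iff exp_ln)
  also have "\<dots> \<longleftrightarrow> of_int b < y" using L lx by (simp add: mult_less_cancel_right)
  also have "\<dots> \<longleftrightarrow> b \<le> lev \<delta> x" using less_ceiling_iff[of b y] unfolding lev_def y_def L_def by linarith
  finally have 2: "x < \<delta> powi b \<longleftrightarrow> b \<le> lev \<delta> x" .
  show ?thesis using 1 2 by blast
qed

lemma lvl_eq:
  assumes "0 < \<delta>" "\<delta> < 1" "\<forall>t\<in>A. 0 < f t"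
  shows "lvl f A (\<delta> powi a) (\<delta> powi b) = Tw A (\<lambda>t. lev \<delta> (f t)) b (a-1)"
  using lev_iv[OF assms(1,2)] assms(3) unfolding lvl_def Tw_def by auto

lemma drift_ln:
  assumes d: "0 < \<delta>" "\<delta> < 1" and "\<bar>lev \<delta> x - lev \<delta> y\<bar> \<le> 1"
  shows "\<bar>ln x - ln y\<bar> \<le> - 2 * ln \<delta>"
proof -
  define L where "L = ln \<delta>"
  have L: "L < 0" using d by (simp add: L_def)
  have bx: "of_int (lev \<delta> x) < ln x / L" "ln x / L \<le> of_int (lev \<delta> x) + 1"
    using lev_bounds[OF d, of x] by (auto simp: L_def)
  have by': "of_int (lev \<delta> y) < ln y / L" "ln y / L \<le> of_int (lev \<delta> y) + 1"
    using lev_bounds[OF d, of y] by (auto simp: L_def)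
  have e: "\<bar>real_of_int (lev \<delta> x) - of_int (lev \<delta> y)\<bar> \<le> 1" using assms(3)
    by (metis of_int_abs of_int_diff of_int_le_1_iff)
  have "\<bar>ln x / L - ln y / L\<bar> \<le> 2" using bx by' e by linarith
  then have "\<bar>(ln x - ln y) / L\<bar> \<le> 2" by (simp add: diff_divide_distrib)
  then have "\<bar>ln x - ln y\<bar> / \<bar>L\<bar> \<le> 2" by (simp add: abs_divide)
  moreover have "0 < \<bar>L\<bar>" using L by simp
  ultimately have "\<bar>ln x - ln y\<bar> \<le> 2 * \<bar>L\<bar>" using pos_divide_le_eq by blast
  then show ?thesis using L by (simp add: L_def)
qed

lemma large_ln:
  assumes d: "0 < \<delta>" "\<delta> < 1" and "lev \<delta> x \<le> N - 1"
  shows "of_int N * ln \<delta> \<le> ln x"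
proof -
  define L where "L = ln \<delta>"
  have L: "L < 0" using d by (simp add: L_def)
  have "real_of_int (lev \<delta> x) \<le> of_int N - 1" using assms(3) by (metis of_int_1 of_int_diff of_int_le_iff)
  then have "ln x / L \<le> of_int N" using lev_bounds[OF d, of x] unfolding L_def by linarith
  then have "of_int N * L \<le> ln x" using L by (simp add: divide_le_eq mult.commute)
  then show ?thesis by (simp add: L_def)
qed

lemma ratio_ok:
  fixes x y :: real
  assumes "0 < x" "0 < y" "\<bar>ln x - ln y\<bar> \<le> C"
  shows "exp (- C) \<le> x / y \<and> x / y \<le> 1 / exp (- C)"
proof -
  have r: "x / y = exp (ln x - ln y)" using assms by (simp add: exp_diff exp_ln)
  have d: "-C \<le> ln x - ln y" "ln x - ln y \<le> C" using assms(3) by auto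
  have "exp (-C) \<le> exp (ln x - ln y)" "exp (ln x - ln y) \<le> exp C" using d by simp_all
  moreover have "1 / exp (-C) = exp C" by (simp add: exp_minus inverse_eq_divide)
  ultimately show ?thesis unfolding r by simp
qed

lemma combine:
  assumes f: "inj_on f Ts" "f ` Ts \<subseteq> S" and g: "inj_on g Ss" "g ` Ss \<subseteq> T"
    and sub: "Ts \<subseteq> T" "Ss \<subseteq> S"
  shows "\<exists>T' S' h. Ts \<subseteq> T' \<and> T' \<subseteq> T \<and> Ss \<subseteq> S' \<and> S' \<subseteq> S \<and> bij_betw h T' S' \<and>
     (\<forall>t\<in>T'. (t \<in> Ts \<and> h t = f t) \<or> (h t \<in> Ss \<and> g (h t) = t))"
proof -
  define F where "F = (\<lambda>X. Ts - g ` (Ss - f ` X))"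
  have mono: "mono F" unfolding F_def by (rule monoI) blast
  define X where "X = lfp F"
  have X: "X = Ts - g ` (Ss - f ` X)" unfolding X_def using lfp_unfold[OF mono] by (simp add: F_def)
  define D where "D = Ss - f ` X"
  define h where "h t = (if t \<in> X then f t else inv_into D g t)" for t
  have XD: "X = Ts - g ` D" unfolding D_def by (rule X)
  have XTs: "X \<subseteq> Ts" by (metis XD Diff_subset)
  have dis: "X \<inter> g ` D = {}" by (metis XD Diff_disjoint Int_commute)
  have hX: "\<And>t. t \<in> X \<Longrightarrow> h t = f t" by (simp add: h_def)
  have hD: "\<And>t. t \<in> g ` D \<Longrightarrow> h t = inv_into D g t" using dis by (auto simp: h_def)
  have b1': "bij_betw f X (f ` X)" using inj_on_imp_bij_betw[OF inj_on_subset[OF f(1) XTs]] .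
  have b1: "bij_betw h X (f ` X)" using bij_betw_cong[of X h f "f ` X"] hX b1' by blast
  have injD: "inj_on g D" using g(1) by (rule inj_on_subset) (auto simp: D_def)
  have b2': "bij_betw (inv_into D g) (g ` D) D" using bij_betw_inv_into[OF inj_on_imp_bij_betw[OF injD]] .
  have b2: "bij_betw h (g ` D) D" using bij_betw_cong[of "g ` D" h "inv_into D g" D] hD b2' by blast
  have fXD: "f ` X \<inter> D = {}" unfolding D_def by blast
  have b: "bij_betw h (X \<union> g ` D) (f ` X \<union> D)"
    by (rule bij_betw_combine[OF b1 b2 fXD])
  have P: "\<forall>t\<in>X \<union> g ` D. (t \<in> Ts \<and> h t = f t) \<or> (h t \<in> Ss \<and> g (h t) = t)"
  proof
    fix t assume t: "t \<in> X \<union> g ` D"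
    show "(t \<in> Ts \<and> h t = f t) \<or> (h t \<in> Ss \<and> g (h t) = t)"
    proof (cases "t \<in> X")
      case True then show ?thesis using XTs by (auto simp: h_def)
    next
      case False
      then have "t \<in> g ` D" using t by blast
      then have "inv_into D g t \<in> D" "g (inv_into D g t) = t" by (auto intro: inv_into_into f_inv_into_f)
      then show ?thesis using False by (auto simp: h_def D_def)
    qed
  qed
  have "Ts \<subseteq> X \<union> g ` D" by (metis XD Diff_partition Un_Diff_cancel2 Un_upper1 Diff_subset_conv)
  moreover have "X \<union> g ` D \<subseteq> T" using XTs sub g(2) by (auto simp: D_def)
  moreover have "Ss \<subseteq> f ` X \<union> D" by (auto simp: D_def)
  moreover have "f ` X \<union> D \<subseteq> S" using XTs f(2) sub by (auto simp: D_def)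
  ultimately show ?thesis using b P by blast
qed




lemma part_gen:
  fixes T :: "'a set" and S :: "'b set" and p :: "'a \<Rightarrow> int" and q :: "'b \<Rightarrow> int"
  assumes HT: "\<And>k m. j0 \<le> k \<Longrightarrow> k \<le> m \<Longrightarrow> Tw T p k m \<lesssim> Tw S q (k-1) (m+1)"
      and HS: "\<And>k m. j0 \<le> k \<Longrightarrow> k \<le> m \<Longrightarrow> Tw S q k m \<lesssim> Tw T p (k-1) (m+1)"
  shows "\<exists>T' S' h. {t\<in>T. j0 \<le> p t} \<subseteq> T' \<and> T' \<subseteq> T \<and> {s\<in>S. j0 \<le> q s} \<subseteq> S' \<and> S' \<subseteq> S
     \<and> bij_betw h T' S' \<and> (\<forall>t\<in>T'. \<bar>p t - q (h t)\<bar> \<le> 1)"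
proof -
  interpret c1: core T S p q j0 using HT by unfold_locales
  interpret c2: core S T q p j0 using HS by unfold_locales
  obtain f where f: "inj_on f {t\<in>T. j0 \<le> p t}" "\<forall>t\<in>T. j0 \<le> p t \<longrightarrow> f t \<in> S \<and> \<bar>p t - q (f t)\<bar> \<le> 1"
    using c1.core_inj by blast
  obtain g where g: "inj_on g {s\<in>S. j0 \<le> q s}" "\<forall>s\<in>S. j0 \<le> q s \<longrightarrow> g s \<in> T \<and> \<bar>q s - p (g s)\<bar> \<le> 1"
    using c2.core_inj by blast
  have "f ` {t\<in>T. j0 \<le> p t} \<subseteq> S" "g ` {s\<in>S. j0 \<le> q s} \<subseteq> T" using f g by auto
  from combine[OF f(1) this(1) g(1) this(2)] obtain T' S' h where
    h: "{t\<in>T. j0 \<le> p t} \<subseteq> T'" "T' \<subseteq> T" "{s\<in>S. j0 \<le> q s} \<subseteq> S'" "S' \<subseteq> S" "bij_betw h T' S'"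
      "\<forall>t\<in>T'. (t \<in> {t\<in>T. j0 \<le> p t} \<and> h t = f t) \<or> (h t \<in> {s\<in>S. j0 \<le> q s} \<and> g (h t) = t)"
    by blast
  have "\<forall>t\<in>T'. \<bar>p t - q (h t)\<bar> \<le> 1"
  proof
    fix t assume t: "t \<in> T'"
    show "\<bar>p t - q (h t)\<bar> \<le> 1"
    proof (cases "t \<in> {t\<in>T. j0 \<le> p t} \<and> h t = f t")
      case True then show ?thesis using f by auto
    next
      case False
      then have "h t \<in> {s\<in>S. j0 \<le> q s}" "g (h t) = t" using h(6) t by auto
      then show ?thesis using g by force
    qed
  qed
  with h show ?thesis by blast
qed

lemma pad_bij:
  assumes h: "bij_betw h T' S'" and sub: "T' \<subseteq> T" "S' \<subseteq> S"
    and e: "inj_on e (T - T')" "e ` (T - T') \<subseteq> S - S'"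
  shows "bij_betw (case_sum (\<lambda>t. if t \<in> T' then h t else e t) id) (T <+> ((S - S') - e ` (T - T'))) S"
proof -
  define \<phi> where "\<phi> = (\<lambda>t. if t \<in> T' then h t else e t)"
  define I where "I = (S - S') - e ` (T - T')"
  have hi: "inj_on h T'" "h ` T' = S'" using h by (auto simp: bij_betw_def)
  have \<phi>img: "\<phi> ` T = S' \<union> e ` (T - T')"
  proof -
    have "T = T' \<union> (T - T')" using sub by blast
    then have "\<phi> ` T = \<phi> ` T' \<union> \<phi> ` (T - T')" by (metis image_Un)
    moreover have "\<phi> ` T' = h ` T'" by (simp add: \<phi>_def)
    moreover have "\<phi> ` (T - T') = e ` (T - T')" by (simp add: \<phi>_def)
    ultimately show ?thesis using hi by simp
  qed
  have \<phi>inj: "inj_on \<phi> T"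
  proof (rule inj_onI)
    fix a b assume a: "a \<in> T" and b: "b \<in> T" and ab: "\<phi> a = \<phi> b"
    show "a = b"
    proof (cases "a \<in> T'"; cases "b \<in> T'")
      assume "a \<in> T'" "b \<in> T'" then show ?thesis using ab hi(1) by (auto simp: \<phi>_def dest: inj_onD)
    next
      assume "a \<notin> T'" "b \<notin> T'" then show ?thesis using ab e(1) a b by (auto simp: \<phi>_def dest: inj_onD)
    next
      assume "a \<in> T'" "b \<notin> T'"
      then have "\<phi> a \<in> S'" "\<phi> b \<in> S - S'" using hi e(2) b by (auto simp: \<phi>_def)
      then show ?thesis using ab by simp
    next
      assume "a \<notin> T'" "b \<in> T'"
      then have "\<phi> b \<in> S'" "\<phi> a \<in> S - S'" using hi e(2) a by (auto simp: \<phi>_def)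
      then show ?thesis using ab by simp
    qed
  qed
  have img: "case_sum \<phi> id ` (T <+> I) = S"
  proof -
    have "case_sum \<phi> id ` (T <+> I) = \<phi> ` T \<union> I" by (auto simp: Plus_def image_Un image_image)
    then show ?thesis using \<phi>img sub e(2) by (auto simp: I_def)
  qed
  have inj: "inj_on (case_sum \<phi> id) (T <+> I)"
  proof (rule inj_onI)
    fix x y assume x: "x \<in> T <+> I" and y: "y \<in> T <+> I" and xy: "case_sum \<phi> id x = case_sum \<phi> id y"
    have dis: "\<phi> ` T \<inter> I = {}" using \<phi>img by (auto simp: I_def)
    show "x = y"
    proof (cases x; cases y)
      fix a b assume "x = Inl a" "y = Inl b"
      then show ?thesis using x y xy \<phi>inj by (auto dest: inj_onD)
    next
      fix a b assume "x = Inl a" "y = Inr b"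
      then show ?thesis using x y xy dis by auto
    next
      fix a b assume "x = Inr a" "y = Inl b"
      then show ?thesis using x y xy dis by auto
    next
      fix a b assume "x = Inr a" "y = Inr b"
      then show ?thesis using xy by auto
    qed
  qed
  show ?thesis using inj img unfolding bij_betw_def \<phi>_def[symmetric] I_def[symmetric] by blast
qed




lemma lev_ge:
  assumes d: "0 < \<delta>" "\<delta> < 1" and x: "0 < x" "x \<le> M"
  shows "\<lceil>ln M / ln \<delta>\<rceil> - 1 \<le> lev \<delta> x"
proof -
  have L: "ln \<delta> < 0" using d by simp
  have "ln x \<le> ln M" using x by simp
  then have "ln M / ln \<delta> \<le> ln x / ln \<delta>" using L by (simp add: divide_right_mono_neg)
  then have "\<lceil>ln M / ln \<delta>\<rceil> \<le> \<lceil>ln x / ln \<delta>\<rceil>" by (rule ceiling_mono)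
  then show ?thesis unfolding lev_def by simp
qed

lemma rat_bound:
  fixes x y :: real
  assumes "0 < x" "0 < y" "\<bar>ln x - ln y\<bar> \<le> C"
  shows "exp (- C) \<le> x / y \<and> x / y \<le> 1 / exp (- C)"
  using ratio_ok[OF assms] .

theorem lemma3p1:
  fixes T :: "'a set" and S :: "'b set"
    and \<tau> :: "'a \<Rightarrow> real" and \<sigma> :: "'b \<Rightarrow> real"
    and N :: int and \<delta> M :: real
  assumes N: "N \<ge> 1"
    and delta: "0 < \<delta>" "\<delta> < 1" "1 \<le> M"
    and tau: "\<And>t. t \<in> T \<Longrightarrow> 0 < \<tau> t \<and> \<tau> t \<le> M"
    and sigma: "\<And>s. s \<in> S \<Longrightarrow> 0 < \<sigma> s \<and> \<sigma> s \<le> M"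
  shows
    "((\<forall>k::int. \<forall>l::nat. k \<ge> N \<and> l \<ge> 1 \<longrightarrow>
         lvl \<tau> T (\<delta> powi (k + int l)) (\<delta> powi k)
           \<lesssim> lvl \<sigma> S (\<delta> powi (k + int l + 1)) (\<delta> powi (k - 1))
       \<and> lvl \<sigma> S (\<delta> powi (k + int l)) (\<delta> powi k)
           \<lesssim> lvl \<tau> T (\<delta> powi (k + int l + 1)) (\<delta> powi (k - 1)))
     \<longrightarrow> (\<exists>\<delta>'>0.
          (\<exists>\<eta>. bij_betw \<eta> T S \<and>
              (\<forall>t\<in>T. \<delta>' \<le> \<tau> t / \<sigma> (\<eta> t) \<and> \<tau> t / \<sigma> (\<eta> t) \<le> 1 / \<delta>'))
        \<or> (\<exists>(I::'b set) (\<eta>::'a + 'b \<Rightarrow> 'b). bij_betw \<eta> (T <+> I) S \<and>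
              (\<forall>t\<in>T <+> I. \<delta>' \<le> case_sum \<tau> (\<lambda>_. 1) t / \<sigma> (\<eta> t)
                  \<and> case_sum \<tau> (\<lambda>_. 1) t / \<sigma> (\<eta> t) \<le> 1 / \<delta>'))
        \<or> (\<exists>(I::'a set) (\<eta>::'a \<Rightarrow> 'b + 'a). bij_betw \<eta> T (S <+> I) \<and>
              (\<forall>t\<in>T. \<delta>' \<le> \<tau> t / case_sum \<sigma> (\<lambda>_. 1) (\<eta> t)
                  \<and> \<tau> t / case_sum \<sigma> (\<lambda>_. 1) (\<eta> t) \<le> 1 / \<delta>'))))
   \<and> ((\<forall>k::int. \<forall>l::nat. l \<ge> 1 \<longrightarrow>
         lvl \<tau> T (\<delta> powi (k + int l)) (\<delta> powi k)
           \<lesssim> lvl \<sigma> S (\<delta> powi (k + int l + 1)) (\<delta> powi (k - 1))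
       \<and> lvl \<sigma> S (\<delta> powi (k + int l)) (\<delta> powi k)
           \<lesssim> lvl \<tau> T (\<delta> powi (k + int l + 1)) (\<delta> powi (k - 1)))
     \<longrightarrow> (\<exists>\<delta>'>0. \<exists>\<eta>. bij_betw \<eta> T S \<and>
              (\<forall>t\<in>T. \<delta>' \<le> \<tau> t / \<sigma> (\<eta> t) \<and> \<tau> t / \<sigma> (\<eta> t) \<le> 1 / \<delta>')))"
proof -
  define p where "p = (\<lambda>t. lev \<delta> (\<tau> t))"
  define q where "q = (\<lambda>s. lev \<delta> (\<sigma> s))"
  define L where "L = ln \<delta>"
  have L: "L < 0" using delta by (simp add: L_def)
  have lnM: "0 \<le> ln M" using delta by simp
  have tpos: "\<forall>t\<in>T. 0 < \<tau> t" using tau by auto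
  have spos: "\<forall>s\<in>S. 0 < \<sigma> s" using sigma by auto
  have LT: "lvl \<tau> T (\<delta> powi a) (\<delta> powi b) = Tw T p b (a-1)" for a b
    using lvl_eq[OF delta(1,2) tpos] by (simp add: p_def)
  have LS: "lvl \<sigma> S (\<delta> powi a) (\<delta> powi b) = Tw S q b (a-1)" for a b
    using lvl_eq[OF delta(1,2) spos] by (simp add: q_def)
  have tr: "Tw T p k m \<lesssim> Tw S q (k-1) (m+1) \<and> Tw S q k m \<lesssim> Tw T p (k-1) (m+1)"
    if km: "k \<le> m" and hyp: "lvl \<tau> T (\<delta> powi (k + int l)) (\<delta> powi k)
           \<lesssim> lvl \<sigma> S (\<delta> powi (k + int l + 1)) (\<delta> powi (k - 1))
       \<and> lvl \<sigma> S (\<delta> powi (k + int l)) (\<delta> powi k)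
           \<lesssim> lvl \<tau> T (\<delta> powi (k + int l + 1)) (\<delta> powi (k - 1))" and l: "l = nat (m - k + 1)" for k m l
  proof -
    have il: "k + int l = m + 1" using km l by simp
    show ?thesis using hyp unfolding il LT LS by (simp add: add.commute)
  qed
  have drift: "\<bar>ln (\<tau> t) - ln (\<sigma> s)\<bar> \<le> - 2 * L" if "\<bar>p t - q s\<bar> \<le> 1" for t s
    using drift_ln[OF delta(1,2)] that by (simp add: p_def q_def L_def)
  show ?thesis
  proof (intro conjI impI)
    assume hyp: "\<forall>k::int. \<forall>l::nat. k \<ge> N \<and> l \<ge> 1 \<longrightarrow>
         lvl \<tau> T (\<delta> powi (k + int l)) (\<delta> powi k)
           \<lesssim> lvl \<sigma> S (\<delta> powi (k + int l + 1)) (\<delta> powi (k - 1))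
       \<and> lvl \<sigma> S (\<delta> powi (k + int l)) (\<delta> powi k)
           \<lesssim> lvl \<tau> T (\<delta> powi (k + int l + 1)) (\<delta> powi (k - 1))"
    have H: "Tw T p k m \<lesssim> Tw S q (k-1) (m+1) \<and> Tw S q k m \<lesssim> Tw T p (k-1) (m+1)" if "N \<le> k" "k \<le> m" for k m
    proof -
      have "N \<le> k \<and> 1 \<le> nat (m - k + 1)" using that by simp
      from hyp[rule_format, OF this] show ?thesis by (rule tr[OF that(2) _ refl])
    qed
    obtain T' S' h where h: "{t\<in>T. N \<le> p t} \<subseteq> T'" "T' \<subseteq> T" "{s\<in>S. N \<le> q s} \<subseteq> S'" "S' \<subseteq> S"
      "bij_betw h T' S'" "\<forall>t\<in>T'. \<bar>p t - q (h t)\<bar> \<le> 1"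
      using part_gen[of N T p S q] H by blast
    define C where "C = ln M - (of_int N + 2) * L"
    have NL: "of_int N * L \<le> 0" using N L by (simp add: mult_nonneg_nonpos)
    have C1: "- 2 * L \<le> C" using NL lnM by (simp add: C_def algebra_simps)
    have largeT: "of_int N * L \<le> ln (\<tau> t) \<and> ln (\<tau> t) \<le> ln M" if "t \<in> T - T'" for t
    proof -
      have "\<not> N \<le> p t" using that h(1) by blast
      then have "lev \<delta> (\<tau> t) \<le> N - 1" by (simp add: p_def)
      then have "of_int N * L \<le> ln (\<tau> t)" using large_ln[OF delta(1,2)] by (simp add: L_def)
      moreover have "ln (\<tau> t) \<le> ln M" using tau[of t] that delta(3) by auto
      ultimately show ?thesis by simp
    qed
    have largeS: "of_int N * L \<le> ln (\<sigma> s) \<and> ln (\<sigma> s) \<le> ln M" if "s \<in> S - S'" for s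
    proof -
      have "\<not> N \<le> q s" using that h(3) by blast
      then have "lev \<delta> (\<sigma> s) \<le> N - 1" by (simp add: q_def)
      then have "of_int N * L \<le> ln (\<sigma> s)" using large_ln[OF delta(1,2)] by (simp add: L_def)
      moreover have "ln (\<sigma> s) \<le> ln M" using sigma[of s] that delta(3) by auto
      ultimately show ?thesis by simp
    qed
    have pairC: "\<bar>a - b\<bar> \<le> C" if "of_int N * L \<le> a \<and> a \<le> ln M" "of_int N * L \<le> b \<and> b \<le> ln M" for a b
      unfolding C_def abs_le_iff distrib_right using that L by linarith
    have padC: "\<bar>a - ln 1\<bar> \<le> C" if "of_int N * L \<le> a \<and> a \<le> ln M" for a
      unfolding C_def abs_le_iff distrib_right ln_one using that L lnM NL by linarith
    have dpos: "0 < exp (- C)" by simp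
    have hi: "inj_on h T'" "h ` T' = S'" using h(5) by (auto simp: bij_betw_def)
    have okT': "exp (- C) \<le> \<tau> t / \<sigma> (h t) \<and> \<tau> t / \<sigma> (h t) \<le> 1 / exp (- C)" if "t \<in> T'" for t
    proof -
      have "h t \<in> S" using hi that h(4) by blast
      then show ?thesis using rat_bound[of "\<tau> t" "\<sigma> (h t)" C] tau sigma h(2) that drift[of t "h t"] h(6) C1
        by force
    qed
    show "\<exists>\<delta>'>0.
          (\<exists>\<eta>. bij_betw \<eta> T S \<and>
              (\<forall>t\<in>T. \<delta>' \<le> \<tau> t / \<sigma> (\<eta> t) \<and> \<tau> t / \<sigma> (\<eta> t) \<le> 1 / \<delta>'))
        \<or> (\<exists>(I::'b set) (\<eta>::'a + 'b \<Rightarrow> 'b). bij_betw \<eta> (T <+> I) S \<and>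
              (\<forall>t\<in>T <+> I. \<delta>' \<le> case_sum \<tau> (\<lambda>_. 1) t / \<sigma> (\<eta> t)
                  \<and> case_sum \<tau> (\<lambda>_. 1) t / \<sigma> (\<eta> t) \<le> 1 / \<delta>'))
        \<or> (\<exists>(I::'a set) (\<eta>::'a \<Rightarrow> 'b + 'a). bij_betw \<eta> T (S <+> I) \<and>
              (\<forall>t\<in>T. \<delta>' \<le> \<tau> t / case_sum \<sigma> (\<lambda>_. 1) (\<eta> t)
                  \<and> \<tau> t / case_sum \<sigma> (\<lambda>_. 1) (\<eta> t) \<le> 1 / \<delta>'))"
    proof (cases "T - T' \<lesssim> S - S'")
      case True
      then obtain e where e: "inj_on e (T - T')" "e ` (T - T') \<subseteq> S - S'" unfolding lepoll_def by blast
      define I where "I = (S - S') - e ` (T - T')"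
      define \<eta> where "\<eta> = case_sum (\<lambda>t. if t \<in> T' then h t else e t) (id :: 'b \<Rightarrow> 'b)"
      have b: "bij_betw \<eta> (T <+> I) S" unfolding \<eta>_def I_def by (rule pad_bij[OF h(5) h(2) h(4) e])
      have ok: "exp (- C) \<le> case_sum \<tau> (\<lambda>_. 1) x / \<sigma> (\<eta> x) \<and> case_sum \<tau> (\<lambda>_. 1) x / \<sigma> (\<eta> x) \<le> 1 / exp (- C)"
        if x: "x \<in> T <+> I" for x
      proof (cases x)
        case (Inl t)
        then have t: "t \<in> T" using x by auto
        show ?thesis
        proof (cases "t \<in> T'")
          case True
          then show ?thesis using okT' Inl by (simp add: \<eta>_def)
        next
          case False
          have "e t \<in> S - S'" using e t False by blast
          then show ?thesis using rat_bound[of "\<tau> t" "\<sigma> (e t)" C] tau sigma t False Inl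
              pairC[OF largeT largeS] by (simp add: \<eta>_def)
        qed
      next
        case (Inr s)
        then have s: "s \<in> S - S'" using x by (auto simp: I_def)
        then show ?thesis using rat_bound[of 1 "\<sigma> s" C] sigma Inr padC[OF largeS[OF s]]
          by (simp add: \<eta>_def abs_minus_commute)
      qed
      show ?thesis using b ok dpos by blast
    next
      case False
      then have "S - S' \<lesssim> T - T'" using lepoll_total by blast
      then obtain e where e: "inj_on e (S - S')" "e ` (S - S') \<subseteq> T - T'" unfolding lepoll_def by blast
      define I where "I = (T - T') - e ` (S - S')"
      define h' where "h' = inv_into T' h"
      have h': "bij_betw h' S' T'" unfolding h'_def by (rule bij_betw_inv_into[OF h(5)])
      define \<beta> where "\<beta> = case_sum (\<lambda>s. if s \<in> S' then h' s else e s) (id :: 'a \<Rightarrow> 'a)"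
      have b: "bij_betw \<beta> (S <+> I) T" unfolding \<beta>_def I_def by (rule pad_bij[OF h' h(4) h(2) e])
      define \<eta> where "\<eta> = inv_into (S <+> I) \<beta>"
      have bi: "bij_betw \<eta> T (S <+> I)" unfolding \<eta>_def by (rule bij_betw_inv_into[OF b])
      have ok: "exp (- C) \<le> \<tau> t / case_sum \<sigma> (\<lambda>_. 1) (\<eta> t) \<and> \<tau> t / case_sum \<sigma> (\<lambda>_. 1) (\<eta> t) \<le> 1 / exp (- C)"
        if t: "t \<in> T" for t
      proof -
        have x: "\<eta> t \<in> S <+> I" using bi t by (auto simp: bij_betw_def)
        have bt: "\<beta> (\<eta> t) = t" unfolding \<eta>_def using b t by (simp add: bij_betw_def f_inv_into_f)
        show ?thesis
        proof (cases "\<eta> t")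
          case (Inl s)
          then have s: "s \<in> S" using x by auto
          show ?thesis
          proof (cases "s \<in> S'")
            case True
            then have "h' s = t" using bt Inl by (simp add: \<beta>_def)
            then have tT': "t \<in> T'" and hts: "h t = s" using True h(5) unfolding h'_def
              by (auto simp: bij_betw_def intro: inv_into_into f_inv_into_f)
            then show ?thesis using okT'[OF tT'] Inl by simp
          next
            case False
            then have ets: "e s = t" using bt Inl by (simp add: \<beta>_def)
            have "t \<in> T - T'" using e s False ets by blast
            then show ?thesis using rat_bound[of "\<tau> t" "\<sigma> s" C] tau sigma s False Inl
                pairC[OF largeT largeS] by simp
          qed
        next
          case (Inr i)
          then have "i = t" using bt by (simp add: \<beta>_def)
          then have "t \<in> T - T'" using x Inr by (auto simp: I_def)
          then show ?thesis using rat_bound[of "\<tau> t" 1 C] tau Inr padC[OF largeT] t by simp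
        qed
      qed
      show ?thesis using bi ok dpos by blast
    qed
  next
    assume hyp: "\<forall>k::int. \<forall>l::nat. l \<ge> 1 \<longrightarrow>
         lvl \<tau> T (\<delta> powi (k + int l)) (\<delta> powi k)
           \<lesssim> lvl \<sigma> S (\<delta> powi (k + int l + 1)) (\<delta> powi (k - 1))
       \<and> lvl \<sigma> S (\<delta> powi (k + int l)) (\<delta> powi k)
           \<lesssim> lvl \<tau> T (\<delta> powi (k + int l + 1)) (\<delta> powi (k - 1))"
    define j0 where "j0 = \<lceil>ln M / ln \<delta>\<rceil> - 1"
    have H: "Tw T p k m \<lesssim> Tw S q (k-1) (m+1) \<and> Tw S q k m \<lesssim> Tw T p (k-1) (m+1)" if "k \<le> m" for k m
    proof -
      have "1 \<le> nat (m - k + 1)" using that by simp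
      from hyp[rule_format, OF this] show ?thesis by (rule tr[OF that _ refl])
    qed
    obtain T' S' h where h: "{t\<in>T. j0 \<le> p t} \<subseteq> T'" "T' \<subseteq> T" "{s\<in>S. j0 \<le> q s} \<subseteq> S'" "S' \<subseteq> S"
      "bij_betw h T' S'" "\<forall>t\<in>T'. \<bar>p t - q (h t)\<bar> \<le> 1"
      using part_gen[of j0 T p S q] H by blast
    have "T \<subseteq> {t\<in>T. j0 \<le> p t}" using lev_ge[OF delta(1,2)] tau by (auto simp: p_def j0_def)
    then have TT: "T' = T" using h(1,2) by blast
    have "S \<subseteq> {s\<in>S. j0 \<le> q s}" using lev_ge[OF delta(1,2)] sigma by (auto simp: q_def j0_def)
    then have SS: "S' = S" using h(3,4) by blast
    have hi: "h ` T = S" using h(5) TT SS by (auto simp: bij_betw_def)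
    have ok: "exp (2 * L) \<le> \<tau> t / \<sigma> (h t) \<and> \<tau> t / \<sigma> (h t) \<le> 1 / exp (2 * L)" if t: "t \<in> T" for t
    proof -
      have "h t \<in> S" using hi t by blast
      then show ?thesis using rat_bound[of "\<tau> t" "\<sigma> (h t)" "- 2 * L"] tau sigma t drift[of t "h t"] h(6) TT
        by force
    qed
    show "\<exists>\<delta>'>0. \<exists>\<eta>. bij_betw \<eta> T S \<and>
              (\<forall>t\<in>T. \<delta>' \<le> \<tau> t / \<sigma> (\<eta> t) \<and> \<tau> t / \<sigma> (\<eta> t) \<le> 1 / \<delta>')"
      using h(5) TT SS ok by (intro exI[of _ "exp (2 * L)"]) auto
  qed
qed



end
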